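(* If $F$ is a balanced wiring, then $\mathrm{Comp}(F)$ is a separating space for $F$: (i) for every $\mathbf u\in\mathrm{Comp}(F)$, $F\mathbf u\subseteq\mathrm{Comp}(F)$; and (ii) for every $n$, if $F^n\mathbf u=0$ for all $\mathbf u\in\mathrm{Comp}(F)$ then $F^n=0$.
   Context: Terms: first-order terms built from an infinite set of variables, a binary function symbol $\bullet$ written infix, infinitely many constant symbols including a distinguished constant $\star$, and for each $n\ge1$ at least one $n$-ary function symbol. $\mathrm{var}(t)$ is the set of variables of $t$; $t$ is closed if $\mathrm{var}(t)=\emptyset$. The height $h(t)$ is the maximal distance from the root to a node in the tree of $t$; the height of an occurrence of a variable in $t$ is its distance from the root. A flow is a pair of terms written $t\leftarrow u$ with $\mathrm{var}(t)\subseteq\mathrm{var}(u)$, considered up to renaming. A fact is a flow $t\leftarrow\star$ (so $t$ is closed). The product of flows $u\leftarrow v$ and $t\leftarrow w$ (representatives chosen with disjoint variable sets) is defined iff $v$ and $t$ are unifiable, and then equals $u\theta\leftarrow w\theta$ with $\theta$ a most general unifier of $v,t$. A wiring is a finite set of flows, written as a formal sum, with $0$ the empty wiring; product $FG=\{fg: f\in F,g\in G, fg\text{ defined}\}$, $F^n$ the $n$-fold product. For a fact $\mathbf u$, $F\mathbf u$ denotes $F\{\mathbf u\}$ (a set of facts). A flow $t\leftarrow u$ is balanced if for every variable $x$, all occurrences of $x$ in $t$ and in $u$ have the same height; a wiring is balanced if all its flows are. The height of a flow $t\leftarrow u$ is $\max\{h(t),h(u)\}$; the height $h(F)$ of a wiring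 is the maximal height of its flows. For a balanced wiring $F$, its computation space $\mathrm{Comp}(F)$ is the set of facts $t\leftarrow\star$ with $h(t)\le h(F)$ and $t$ built using only symbols occurring in $F$ and the constant $\star$. A separating space for a wiring $F$ is a set of facts $\mathbf S$ such that $F\mathbf u\subseteq\mathbf S$ for all $\mathbf u\in\mathbf S$, and such that, for every $n$, $F^n\mathbf u=0$ for all $\mathbf u\in\mathbf S$ implies $F^n=0$. *)

theory Defs
  imports Main
begin

text \<open>A function symbol is a pair of a name and an arity; the arity of an
  application is the length of its argument list.  Thus (Star,0) is the distinguished
  constant, (Bullet,2) is the binary symbol, (Sym k, 0) are infinitely many constants,
  and (Sym k, n) are n-ary symbols for every n.\<close>

datatype sym = Star | Bullet | Sym nat

datatype trm = Var nat | App sym "trm list"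

definition star :: trm where "star = App Star []"

fun vars :: "trm \<Rightarrow> nat set" where
  "vars (Var x) = {x}"
| "vars (App f ts) = (\<Union>t\<in>set ts. vars t)"

fun subst :: "(nat \<Rightarrow> trm) \<Rightarrow> trm \<Rightarrow> trm" where
  "subst \<sigma> (Var x) = \<sigma> x"
| "subst \<sigma> (App f ts) = App f (map (subst \<sigma>) ts)"

fun syms :: "trm \<Rightarrow> (sym \<times> nat) set" where
  "syms (Var x) = {}"
| "syms (App f ts) = insert (f, length ts) (\<Union>t\<in>set ts. syms t)"

fun height :: "trm \<Rightarrow> nat" where
  "height (Var x) = 0"
| "height (App f ts) = (if ts = [] then 0 else Suc (Max (set (map height ts))))"

fun vdepths :: "trm \<Rightarrow> nat \<Rightarrow> nat set" where
  "vdepths (Var y) x = (if x = y then {0} else {})"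
| "vdepths (App f ts) x = (\<Union>t\<in>set ts. Suc ` vdepths t x)"

definition is_mgu :: "(nat \<Rightarrow> trm) \<Rightarrow> trm \<Rightarrow> trm \<Rightarrow> bool" where
  "is_mgu \<sigma> s t \<longleftrightarrow> subst \<sigma> s = subst \<sigma> t \<and>
     (\<forall>\<tau>. subst \<tau> s = subst \<tau> t \<longrightarrow> (\<exists>\<delta>. \<forall>x. \<tau> x = subst \<delta> (\<sigma> x)))"

definition ren :: "(nat \<Rightarrow> nat) \<Rightarrow> trm \<Rightarrow> trm" where
  "ren \<rho> t = subst (Var \<circ> \<rho>) t"

text \<open>A flow  t \<leftarrow> u  is represented by the pair (t,u); flows are considered up to
  renaming, so a (finite) wiring is given by a finite set of representatives.
  The product of wirings collects the products of all pairs of flows, computed for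
  every choice of representatives with disjoint variables and every mgu; hence it is a
  (possibly infinite) set of representatives of the product wiring, and it is empty iff
  the product wiring is 0.\<close>

definition is_flow :: "trm \<times> trm \<Rightarrow> bool" where
  "is_flow f \<longleftrightarrow> vars (fst f) \<subseteq> vars (snd f)"

definition wiring :: "(trm \<times> trm) set \<Rightarrow> bool" where
  "wiring F \<longleftrightarrow> finite F \<and> (\<forall>f\<in>F. is_flow f)"

definition is_fact :: "trm \<times> trm \<Rightarrow> bool" where
  "is_fact f \<longleftrightarrow> snd f = star \<and> vars (fst f) = {}"

definition wprod :: "(trm \<times> trm) set \<Rightarrow> (trm \<times> trm) set \<Rightarrow> (trm \<times> trm) set" where
  "wprod F G = {(subst \<sigma> u, subst \<sigma> w) | u v t w \<sigma>.
      (u, v) \<in> F \<and>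
      (\<exists>\<rho> t0 w0. (t0, w0) \<in> G \<and> bij \<rho> \<and> t = ren \<rho> t0 \<and> w = ren \<rho> w0) \<and>
      (vars t \<union> vars w) \<inter> (vars u \<union> vars v) = {} \<and>
      is_mgu \<sigma> v t}"

fun wpow :: "(trm \<times> trm) set \<Rightarrow> nat \<Rightarrow> (trm \<times> trm) set" where
  "wpow F 0 = {(Var 0, Var 0)}"
| "wpow F (Suc n) = wprod F (wpow F n)"

definition wapp :: "(trm \<times> trm) set \<Rightarrow> trm \<times> trm \<Rightarrow> (trm \<times> trm) set" where
  "wapp F u = wprod F {u}"

definition balanced_flow :: "trm \<times> trm \<Rightarrow> bool" where
  "balanced_flow f \<longleftrightarrow>
     (\<forall>x. \<forall>d\<in>vdepths (fst f) x \<union> vdepths (snd f) x.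
            \<forall>d'\<in>vdepths (fst f) x \<union> vdepths (snd f) x. d = d')"

definition balanced :: "(trm \<times> trm) set \<Rightarrow> bool" where
  "balanced F \<longleftrightarrow> (\<forall>f\<in>F. balanced_flow f)"

definition flow_height :: "trm \<times> trm \<Rightarrow> nat" where
  "flow_height f = max (height (fst f)) (height (snd f))"

definition wheight :: "(trm \<times> trm) set \<Rightarrow> nat" where
  "wheight F = Max (insert 0 (flow_height ` F))"

definition wsyms :: "(trm \<times> trm) set \<Rightarrow> (sym \<times> nat) set" where
  "wsyms F = (\<Union>f\<in>F. syms (fst f) \<union> syms (snd f))"

definition Comp :: "(trm \<times> trm) set \<Rightarrow> (trm \<times> trm) set" where
  "Comp F = {(t, star) | t. vars t = {} \<and> height t \<le> wheight F \<and>
                           syms t \<subseteq> wsyms F \<union> {(Star, 0)}}"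

definition separating :: "(trm \<times> trm) set \<Rightarrow> (trm \<times> trm) set \<Rightarrow> bool" where
  "separating S F \<longleftrightarrow> (\<forall>u\<in>S. is_fact u) \<and>
     (\<forall>u\<in>S. wapp F u \<subseteq> S) \<and>
     (\<forall>n. (\<forall>u\<in>S. wapp (wpow F n) u = {}) \<longrightarrow> wpow F n = {})"

end

theory Submission
  imports Defs
begin

fun fit :: "nat \<Rightarrow> (sym \<times> nat) set \<Rightarrow> (nat \<Rightarrow> nat) \<Rightarrow> nat \<Rightarrow> trm \<Rightarrow> bool" where
  "fit H S L d (Var x) = (L x = d \<and> d \<le> H)"
| "fit H S L d (App f ts) = ((f, length ts) \<in> S \<and> d \<le> H \<and> (\<forall>t\<in>set ts. fit H S L (Suc d) t))"

fun cut :: "nat \<Rightarrow> trm \<Rightarrow> trm" where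
  "cut k (Var x) = Var x"
| "cut 0 (App f ts) = (if ts = [] then App f [] else star)"
| "cut (Suc k) (App f ts) = App f (map (cut k) ts)"

fun clean :: "(sym \<times> nat) set \<Rightarrow> trm \<Rightarrow> trm" where
  "clean S (Var x) = Var x"
| "clean S (App f ts) = (if (f, length ts) \<in> S then App f (map (clean S) ts) else star)"

fun tower :: "nat \<Rightarrow> trm" where
  "tower 0 = star"
| "tower (Suc k) = App (Sym 0) [tower k]"

lemma height_mem: "t \<in> set ts \<Longrightarrow> height t < height (App f ts)"
proof -
  assume t: "t \<in> set ts"
  then have ne: "ts \<noteq> []" by auto
  have "height t \<le> Max (set (map height ts))" by (rule Max_ge) (use t in auto)
  then show ?thesis using ne by simp
qed

lemma height_App_le: "ts \<noteq> [] \<Longrightarrow> (\<forall>t\<in>set ts. height t + Suc d \<le> H) \<Longrightarrow> height (App f ts) + d \<le> H"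
proof -
  assume ne: "ts \<noteq> []" and a: "\<forall>t\<in>set ts. height t + Suc d \<le> H"
  have "Max (set (map height ts)) \<le> H - Suc d" using ne a by (subst Max_le_iff) auto
  moreover have "height (App f ts) = Suc (Max (set (map height ts)))" using ne by simp
  moreover obtain t where "t \<in> set ts" using ne by (cases ts) auto
  then have "Suc d \<le> H" using a by auto
  ultimately show ?thesis by linarith
qed

lemma fit_intro:
  "height s + d \<le> H \<Longrightarrow> syms s \<subseteq> S \<Longrightarrow> (\<forall>x e. e \<in> vdepths s x \<longrightarrow> L x = d + e) \<Longrightarrow> fit H S L d s"
proof (induction s arbitrary: d)
  case (Var x)
  then show ?case by auto
next
  case (App f ts)
  show ?case
  proof (simp, intro conjI ballI)
    show "(f, length ts) \<in> S" using App.prems by auto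
    show "d \<le> H" using App.prems by auto
    fix t assume t: "t \<in> set ts"
    show "fit H S L (Suc d) t"
    proof (rule App.IH[OF t])
      show "height t + Suc d \<le> H" using height_mem[OF t, of f] App.prems(1) by simp
      show "syms t \<subseteq> S" using App.prems(2) t by auto
      show "\<forall>x e. e \<in> vdepths t x \<longrightarrow> L x = Suc d + e" using App.prems(3) t by fastforce
    qed
  qed
qed

lemma fit_elim:
  "fit H S L d s \<Longrightarrow> height s + d \<le> H \<and> syms s \<subseteq> S \<and> (\<forall>x e. e \<in> vdepths s x \<longrightarrow> L x = d + e)"
proof (induction s arbitrary: d)
  case (Var x)
  then show ?case by auto
next
  case (App f ts)
  have IH: "\<And>t. t \<in> set ts \<Longrightarrow> height t + Suc d \<le> H \<and> syms t \<subseteq> S \<and> (\<forall>x e. e \<in> vdepths t x \<longrightarrow> L x = Suc d + e)"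
  proof -
    fix t assume t: "t \<in> set ts"
    have "fit H S L (Suc d) t" using App.prems t by auto
    then show "height t + Suc d \<le> H \<and> syms t \<subseteq> S \<and> (\<forall>x e. e \<in> vdepths t x \<longrightarrow> L x = Suc d + e)"
      using App.IH[OF t] by blast
  qed
  have "height (App f ts) + d \<le> H"
  proof (cases "ts = []")
    case True then show ?thesis using App.prems by simp
  next
    case False then show ?thesis using IH by (intro height_App_le) auto
  qed
  then show ?case using IH App.prems by fastforce
qed

lemma vdepths_le: "e \<in> vdepths s x \<Longrightarrow> e \<le> height s"
proof (induction s arbitrary: e)
  case (Var y) then show ?case by (auto split: if_splits)
next
  case (App f ts)
  then obtain t e1 where t: "t \<in> set ts" "e1 \<in> vdepths t x" "e = Suc e1" by auto
  then have "e1 \<le> height t" using App.IH by auto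
  then show ?case using height_mem[OF t(1), of f] t by simp
qed

lemma vars_vdepths: "x \<in> vars s \<Longrightarrow> vdepths s x \<noteq> {}"
  by (induction s) fastforce+

lemma fit_var_le: "fit H S L d s \<Longrightarrow> x \<in> vars s \<Longrightarrow> L x \<le> H"
proof -
  assume a: "fit H S L d s" "x \<in> vars s"
  then obtain e where "e \<in> vdepths s x" using vars_vdepths by blast
  with fit_elim[OF a(1)] vdepths_le[of e s x] show ?thesis by fastforce
qed

lemma fit_cong: "(\<forall>x\<in>vars s. L x = L' x) \<Longrightarrow> fit H S L d s = fit H S L' d s"
  by (induction s arbitrary: d) auto

lemma subst_comp: "subst \<delta> (subst \<sigma> s) = subst (subst \<delta> \<circ> \<sigma>) s"
  by (induction s) auto

lemma subst_cong: "(\<forall>x\<in>vars s. \<sigma> x = \<tau> x) \<Longrightarrow> subst \<sigma> s = subst \<tau> s"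
  by (induction s) auto

lemma subst_eq_var: "subst \<sigma> s = subst \<tau> s \<Longrightarrow> x \<in> vars s \<Longrightarrow> \<sigma> x = \<tau> x"
  by (induction s) auto

lemma vars_subst: "vars (subst \<sigma> s) = (\<Union>x\<in>vars s. vars (\<sigma> x))"
  by (induction s) auto

lemma height_subst: "height s \<le> height (subst \<delta> s)"
proof (induction s)
  case (Var x) then show ?case by simp
next
  case (App f ts)
  show ?case
  proof (cases "ts = []")
    case True then show ?thesis by simp
  next
    case False
    have "\<forall>t\<in>set ts. height t + Suc 0 \<le> height (subst \<delta> (App f ts))"
      using App.IH height_mem[of _ "map (subst \<delta>) ts" f] by fastforce
    then show ?thesis using height_App_le[OF False, of 0] by simp
  qed
qed

lemma syms_subst: "syms s \<subseteq> syms (subst \<delta> s)"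
  by (induction s) auto

lemma height_cut: "height (cut k s) \<le> k"
proof (induction k s rule: cut.induct)
  case (3 k f ts)
  then show ?case by (auto simp: Max_le_iff)
qed (auto simp: star_def)

lemma cut_subst:
  "fit H S L d s \<Longrightarrow> cut (H - d) (subst \<tau> s) = subst (\<lambda>x. cut (H - L x) (\<tau> x)) s"
proof (induction s arbitrary: d)
  case (Var x) then show ?case by simp
next
  case (App f ts)
  show ?case
  proof (cases "ts = []")
    case True then show ?thesis by (cases "H - d") auto
  next
    case False
    then obtain t where t: "t \<in> set ts" by (cases ts) auto
    with App.prems have "Suc d \<le> H" by (cases t) auto
    then have "H - d = Suc (H - Suc d)" by simp
    then show ?thesis using App by simp
  qed
qed

lemma cut_at:
  "cut k (subst \<delta>2 s) = subst \<delta>' s \<Longrightarrow> e \<in> vdepths s z \<Longrightarrow> e \<le> k \<Longrightarrow> \<delta>' z = cut (k - e) (\<delta>2 z)"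
proof (induction s arbitrary: k e)
  case (Var y) then show ?case by (auto split: if_splits)
next
  case (App f ts)
  then obtain t e1 where t: "t \<in> set ts" "e1 \<in> vdepths t z" "e = Suc e1" by auto
  then obtain k1 where k: "k = Suc k1" using App.prems(3) by (cases k) auto
  have "map (cut k1) (map (subst \<delta>2) ts) = map (subst \<delta>') ts" using App.prems(1) k by simp
  then have "cut k1 (subst \<delta>2 t) = subst \<delta>' t" using t(1) by (simp add: map_eq_conv)
  from App.IH[OF t(1) this t(2)] show ?case using k t App.prems(3) by simp
qed

lemma height_cut_tower: "j \<le> K \<Longrightarrow> height (cut j (tower K)) = j"
proof (induction j arbitrary: K)
  case 0 then show ?case by (cases K) (auto simp: star_def)
next
  case (Suc j) then obtain K1 where "K = Suc K1" by (cases K) auto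
  with Suc show ?case by simp
qed

lemma syms_clean: "syms (clean S s) \<subseteq> S \<union> {(Star, 0)}"
  by (induction S s rule: clean.induct) (auto simp: star_def)

lemma clean_subst: "syms s \<subseteq> S \<Longrightarrow> clean S (subst \<tau> s) = subst (clean S \<circ> \<tau>) s"
  by (induction s) auto

lemma ren_fit: "inj \<rho> \<Longrightarrow> fit H S L d s \<Longrightarrow> fit H S (\<lambda>y. L (inv \<rho> y)) d (ren \<rho> s)"
proof (induction s arbitrary: d)
  case (Var x) then show ?case by (simp add: ren_def)
next
  case (App f ts) then show ?case by (auto simp: ren_def)
qed

lemma fit_subst:
  "fit H S L d s \<Longrightarrow> (\<forall>x\<in>vars s. fit H S L' (L x) (\<sigma> x)) \<Longrightarrow> fit H S L' d (subst \<sigma> s)"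
  by (induction s arbitrary: d) auto

lemma prod_fit:
  assumes S: "(Star, 0) \<in> S"
    and fu: "fit H S L1 0 u" and fv: "fit H S L1 0 v"
    and ft0: "fit H S L2 0 t0" and fw0: "fit H S L2 0 w0"
    and bij: "bij \<rho>" and tdef: "t = ren \<rho> t0" and wdef: "w = ren \<rho> w0"
    and disj: "(vars t \<union> vars w) \<inter> (vars u \<union> vars v) = {}"
    and mgu: "is_mgu \<sigma> v t"
  shows "\<exists>L'. fit H S L' 0 (subst \<sigma> u) \<and> fit H S L' 0 (subst \<sigma> w)"
proof -
  define L2' where "L2' = (\<lambda>y. L2 (inv \<rho> y))"
  have inj: "inj \<rho>" using bij bij_is_inj by blast
  have ft': "fit H S L2' 0 t" "fit H S L2' 0 w"
    using ren_fit[OF inj ft0] ren_fit[OF inj fw0] tdef wdef L2'_def by auto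
  define L where "L = (\<lambda>x. min H (if x \<in> vars u \<union> vars v then L1 x else L2' x))"
  have LH: "\<And>x. L x \<le> H" by (simp add: L_def)
  have fu2: "fit H S L 0 u"
    using fu fit_var_le[OF fu] by (subst fit_cong[where L'=L1]) (auto simp: L_def)
  have fv2: "fit H S L 0 v"
    using fv fit_var_le[OF fv] by (subst fit_cong[where L'=L1]) (auto simp: L_def)
  have ft2: "fit H S L 0 t"
    using ft'(1) fit_var_le[OF ft'(1)] disj by (subst fit_cong[where L'=L2']) (auto simp: L_def)
  have fw2: "fit H S L 0 w"
    using ft'(2) fit_var_le[OF ft'(2)] disj by (subst fit_cong[where L'=L2']) (auto simp: L_def)
  have unif: "subst \<sigma> v = subst \<sigma> t"
    and gen: "\<And>\<tau>. subst \<tau> v = subst \<tau> t \<Longrightarrow> \<exists>\<delta>. \<forall>x. \<tau> x = subst \<delta> (\<sigma> x)"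
    using mgu unfolding is_mgu_def by auto
  have hgt: "height (\<sigma> x) + L x \<le> H" for x
  proof -
    define \<tau> where "\<tau> = (\<lambda>x. cut (H - L x) (\<sigma> x))"
    have "subst \<tau> v = subst \<tau> t"
      using cut_subst[OF fv2, of \<sigma>] cut_subst[OF ft2, of \<sigma>] unif by (simp add: \<tau>_def)
    then obtain \<delta> where "\<forall>x. \<tau> x = subst \<delta> (\<sigma> x)" using gen by blast
    then have "height (\<sigma> x) \<le> height (\<tau> x)" using height_subst by metis
    also have "\<dots> \<le> H - L x" unfolding \<tau>_def by (rule height_cut)
    finally show ?thesis using LH[of x] by simp
  qed
  have sy: "syms (\<sigma> x) \<subseteq> S" for x
  proof -
    define \<tau> where "\<tau> = clean S \<circ> \<sigma>"
    have "subst \<tau> v = subst \<tau> t"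
      using clean_subst[of v S \<sigma>] clean_subst[of t S \<sigma>] fit_elim[OF fv2] fit_elim[OF ft2] unif
      by (simp add: \<tau>_def)
    then obtain \<delta> where "\<forall>x. \<tau> x = subst \<delta> (\<sigma> x)" using gen by blast
    then have "syms (\<sigma> x) \<subseteq> syms (\<tau> x)" using syms_subst by metis
    also have "\<dots> \<subseteq> S" using syms_clean[of S "\<sigma> x"] S by (auto simp: \<tau>_def)
    finally show ?thesis .
  qed
  have cons: "L x + e = L y + e'" if ex: "e \<in> vdepths (\<sigma> x) z" and ey: "e' \<in> vdepths (\<sigma> y) z" for x y z e e'
  proof -
    define \<delta>2 where "\<delta>2 = Var(z := tower H)"
    define \<tau> where "\<tau> = (\<lambda>x. cut (H - L x) (subst \<delta>2 (\<sigma> x)))"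
    have "subst \<tau> v = subst \<tau> t"
      using cut_subst[OF fv2, of "subst \<delta>2 \<circ> \<sigma>"] cut_subst[OF ft2, of "subst \<delta>2 \<circ> \<sigma>"] unif
        subst_comp[of \<delta>2 \<sigma> v] subst_comp[of \<delta>2 \<sigma> t]
      by (simp add: \<tau>_def)
    then obtain \<delta> where d: "\<forall>x. \<tau> x = subst \<delta> (\<sigma> x)" using gen by blast
    have ex': "e \<le> H - L x" using vdepths_le[OF ex] hgt[of x] by simp
    have ey': "e' \<le> H - L y" using vdepths_le[OF ey] hgt[of y] by simp
    have "\<delta> z = cut (H - L x - e) (tower H)"
      using cut_at[of "H - L x" \<delta>2 "\<sigma> x" \<delta> e z] d ex ex' by (simp add: \<tau>_def \<delta>2_def)
    moreover have "\<delta> z = cut (H - L y - e') (tower H)"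
      using cut_at[of "H - L y" \<delta>2 "\<sigma> y" \<delta> e' z] d ey ey' by (simp add: \<tau>_def \<delta>2_def)
    ultimately have "H - L x - e = H - L y - e'"
      using height_cut_tower[of "H - L x - e" H] height_cut_tower[of "H - L y - e'" H] by simp
    then show ?thesis using ex' ey' LH[of x] LH[of y] by simp
  qed
  define L' where "L' = (\<lambda>z. SOME n. \<exists>x e. e \<in> vdepths (\<sigma> x) z \<and> n = L x + e)"
  have fs: "fit H S L' (L x) (\<sigma> x)" for x
  proof (rule fit_intro)
    show "height (\<sigma> x) + L x \<le> H" by (rule hgt)
    show "syms (\<sigma> x) \<subseteq> S" by (rule sy)
    show "\<forall>z e. e \<in> vdepths (\<sigma> x) z \<longrightarrow> L' z = L x + e"
    proof (intro allI impI)
      fix z e assume e: "e \<in> vdepths (\<sigma> x) z"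
      have ex: "\<exists>n. \<exists>x e. e \<in> vdepths (\<sigma> x) z \<and> n = L x + e" using e by blast
      have "\<exists>x1 e1. e1 \<in> vdepths (\<sigma> x1) z \<and> L' z = L x1 + e1"
        unfolding L'_def by (rule someI_ex[OF ex])
      then show "L' z = L x + e" using cons e by metis
    qed
  qed
  show ?thesis using fit_subst[OF fu2] fit_subst[OF fw2] fs by blast
qed

lemma vdepths_vars: "e \<in> vdepths s x \<Longrightarrow> x \<in> vars s"
  by (induction s arbitrary: e) (fastforce split: if_splits)+

lemma subst_Var: "subst Var s = s"
  by (induction s) (auto simp: map_idI)

lemma subst_closed: "vars s = {} \<Longrightarrow> subst \<sigma> s = s"
  using subst_cong[of s \<sigma> Var] subst_Var by auto

lemma fit_closed: "vars s = {} \<Longrightarrow> height s \<le> H \<Longrightarrow> syms s \<subseteq> S \<Longrightarrow> fit H S L 0 s"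
  by (rule fit_intro) (auto dest: vdepths_vars)

lemma fit_star: "(Star, 0) \<in> S \<Longrightarrow> d \<le> H \<Longrightarrow> fit H S L d star"
  by (simp add: star_def)

definition good :: "nat \<Rightarrow> (sym \<times> nat) set \<Rightarrow> trm \<times> trm \<Rightarrow> bool" where
  "good H S p \<longleftrightarrow> (\<exists>L. fit H S L 0 (fst p) \<and> fit H S L 0 (snd p))"

lemma prod_good:
  assumes S: "(Star, 0) \<in> S" and F: "\<forall>f\<in>F. good H S f" and G: "\<forall>g\<in>G. good H S g"
    and p: "p \<in> wprod F G"
  shows "good H S p"
proof -
  from p obtain u v t w \<sigma> \<rho> t0 w0 where pe: "p = (subst \<sigma> u, subst \<sigma> w)"
    and uv: "(u, v) \<in> F" and tw: "(t0, w0) \<in> G" and bij: "bij \<rho>" and t: "t = ren \<rho> t0" "w = ren \<rho> w0"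
    and disj: "(vars t \<union> vars w) \<inter> (vars u \<union> vars v) = {}" and mgu: "is_mgu \<sigma> v t"
    unfolding wprod_def by blast
  from F uv obtain L1 where L1: "fit H S L1 0 u" "fit H S L1 0 v" unfolding good_def by fastforce
  from G tw obtain L2 where L2: "fit H S L2 0 t0" "fit H S L2 0 w0" unfolding good_def by fastforce
  show ?thesis using prod_fit[OF S L1 L2 bij t disj mgu] pe unfolding good_def by auto
qed

lemma flow_good:
  assumes w: "wiring F" and b: "balanced F" and f: "f \<in> F"
  shows "good (wheight F) (wsyms F \<union> {(Star, 0)}) f"
proof -
  let ?H = "wheight F" and ?S = "wsyms F \<union> {(Star, 0)}"
  have fin: "finite F" using w unfolding wiring_def by auto
  have "flow_height f \<le> ?H" unfolding wheight_def using fin f by (intro Max_ge) auto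
  then have h: "height (fst f) \<le> ?H" "height (snd f) \<le> ?H" unfolding flow_height_def by auto
  have sy: "syms (fst f) \<subseteq> ?S" "syms (snd f) \<subseteq> ?S" using f unfolding wsyms_def by auto
  have bf: "balanced_flow f" using b f unfolding balanced_def by auto
  define L where "L = (\<lambda>x. SOME e. e \<in> vdepths (fst f) x \<union> vdepths (snd f) x)"
  have Le: "L x = e" if "e \<in> vdepths (fst f) x \<union> vdepths (snd f) x" for x e
  proof -
    have "L x \<in> vdepths (fst f) x \<union> vdepths (snd f) x" unfolding L_def using that by (rule someI)
    then show ?thesis using bf that unfolding balanced_flow_def by blast
  qed
  have "fit ?H ?S L 0 (fst f)" using h sy Le by (intro fit_intro) auto
  moreover have "fit ?H ?S L 0 (snd f)" using h sy Le by (intro fit_intro) auto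
  ultimately show ?thesis unfolding good_def by blast
qed

lemma wpow_good:
  assumes w: "wiring F" and b: "balanced F"
  shows "p \<in> wpow F n \<Longrightarrow> good (wheight F) (wsyms F \<union> {(Star, 0)}) p"
proof (induction n arbitrary: p)
  case 0
  then show ?case unfolding good_def by (auto intro!: exI[of _ "\<lambda>_. 0"])
next
  case (Suc n)
  show ?case
    by (rule prod_good[of _ F _ "wpow F n"]) (use Suc flow_good[OF w b] in auto)
qed

theorem mainTheorem6:
  assumes "wiring F" and "balanced F"
  shows "separating (Comp F) F"
proof -
  let ?H = "wheight F" and ?S = "wsyms F \<union> {(Star, 0)}"
  have S: "(Star, 0) \<in> ?S" by simp
  have Fg: "\<forall>f\<in>F. good ?H ?S f" using flow_good[OF assms] by blast
  have comp_good: "good ?H ?S u" if "u \<in> Comp F" for u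
  proof -
    from that obtain t where u: "u = (t, star)" "vars t = {}" "height t \<le> ?H" "syms t \<subseteq> ?S"
      unfolding Comp_def by auto
    show ?thesis unfolding good_def using u fit_closed[OF u(2-4)] fit_star[OF S] by auto
  qed
  have A: "\<forall>u\<in>Comp F. is_fact u" unfolding Comp_def is_fact_def by auto
  have B: "wapp F u \<subseteq> Comp F" if uC: "u \<in> Comp F" for u
  proof
    fix p assume p: "p \<in> wapp F u"
    from uC obtain t0 where u: "u = (t0, star)" "vars t0 = {}" unfolding Comp_def by auto
    have pg: "good ?H ?S p"
      using prod_good[OF S Fg _ p[unfolded wapp_def]] comp_good[OF uC] by auto
    from p obtain a v t w \<sigma> \<rho> t1 w1 where pe: "p = (subst \<sigma> a, subst \<sigma> w)"
      and av: "(a, v) \<in> F" and tw: "(t1, w1) \<in> {u}" and t: "t = ren \<rho> t1" "w = ren \<rho> w1"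
      and mgu: "is_mgu \<sigma> v t"
      unfolding wapp_def wprod_def by blast
    have t1: "t1 = t0" "w1 = star" using tw u by auto
    have tt: "t = t0" using t t1 u(2) subst_closed unfolding ren_def by auto
    have ww: "w = star" using t t1 subst_closed[of star] unfolding ren_def by (auto simp: star_def)
    have flow: "vars a \<subseteq> vars v" using assms(1) av unfolding wiring_def is_flow_def by fastforce
    have "subst \<sigma> v = subst \<sigma> t" using mgu unfolding is_mgu_def by auto
    then have "vars (subst \<sigma> v) = {}" using tt u(2) vars_subst[of \<sigma> t0] by auto
    then have "vars (subst \<sigma> a) = {}" using flow vars_subst[of \<sigma> a] vars_subst[of \<sigma> v] by auto
    moreover have "subst \<sigma> w = star" using ww by (simp add: star_def)
    moreover from pg obtain L where "fit ?H ?S L 0 (subst \<sigma> a)" unfolding good_def pe by auto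
    note fit_elim[OF this]
    ultimately show "p \<in> Comp F" unfolding Comp_def pe by auto
  qed
  have C: "wpow F n = {}" if none: "\<forall>u\<in>Comp F. wapp (wpow F n) u = {}" for n
  proof (rule ccontr)
    assume "wpow F n \<noteq> {}"
    then obtain a b where ab: "(a, b) \<in> wpow F n" by auto
    from wpow_good[OF assms ab] obtain L where fb: "fit ?H ?S L 0 b" unfolding good_def by auto
    define c where "c = subst (\<lambda>_. star) b"
    have "fit ?H ?S (\<lambda>_. 0) 0 c" unfolding c_def
      using fb fit_var_le[OF fb] by (intro fit_subst) (auto simp: star_def)
    note fc = fit_elim[OF this]
    have vc: "vars c = {}" unfolding c_def vars_subst by (simp add: star_def)
    have cC: "(c, star) \<in> Comp F" unfolding Comp_def using fc vc by auto
    define \<sigma> where "\<sigma> = (\<lambda>x. if x \<in> vars b then star else Var x)"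
    have sb: "subst \<sigma> b = c" unfolding c_def \<sigma>_def by (rule subst_cong) auto
    have sc: "subst \<sigma> c = c" using subst_closed[OF vc] .
    have mgu: "is_mgu \<sigma> b c" unfolding is_mgu_def
    proof (intro conjI allI impI)
      show "subst \<sigma> b = subst \<sigma> c" using sb sc by simp
      fix \<tau> assume eq: "subst \<tau> b = subst \<tau> c"
      have "subst \<tau> b = subst (\<lambda>_. star) b" using eq subst_closed[OF vc] c_def by simp
      then have "\<tau> x = star" if "x \<in> vars b" for x using subst_eq_var that by metis
      then show "\<exists>\<delta>. \<forall>x. \<tau> x = subst \<delta> (\<sigma> x)"
        by (intro exI[of _ \<tau>]) (auto simp: \<sigma>_def star_def)
    qed
    have rc: "c = ren id c" "star = ren id star" unfolding ren_def
      using subst_closed[OF vc] subst_closed[of star] by (auto simp: star_def)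
    have "(subst \<sigma> a, subst \<sigma> star) \<in> wapp (wpow F n) (c, star)"
      unfolding wapp_def wprod_def
      apply (simp only: mem_Collect_eq)
      apply (rule exI[of _ a], rule exI[of _ b], rule exI[of _ c], rule exI[of _ star], rule exI[of _ \<sigma>])
      using ab mgu rc vc by (auto simp: star_def intro!: exI[of _ id])
    then show False using none cC by auto
  qed
  show ?thesis unfolding separating_def using A B C by blast
qed

end
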